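(* Let $t$ be an integer, $G$ a finite graph and $(T,Q,\alpha,\beta,R)$ an NLC-decomposition of $G$ with $|Q|\le t$. Let $y$ be a non-root node of $T$, let $p$ be its parent, and let $C=V(T_{y\mid p})\cap V(G)$ and $D=V(T_{p\mid y})\cap V(G)$. For every $q\in Q$ let $U_q=\{u\in C:\beta(\{y,u\})(\alpha(u))=q\}$. Then $(U_q)_{q\in Q}$ is a $D$-twin partition of $C$.
   Context: An NLC-decomposition of $G$ is a tuple $(T,Q,\alpha,\beta,R)$ where $T$ is a rooted binary tree (each node has at most one left child and at most one right child) whose leaf set is $V(G)$, $Q$ is a finite set of labels, $\alpha:V(G)\to Q$, $\beta$ assigns to each 2-element subset of $V(T)$ a function $Q\to Q$, and $R$ assigns to each node a subset of $Q\times Q$, such that: (nlc1) for distinct $u,v$ with $u$ an ancestor of $v$ and $u=u_0,u_1,\dots,u_n=v$ the $u$-$v$ path in $T$, $\beta(\{u_0,u_1\})\circ\cdots\circ\beta(\{u_{n-1},u_n\})=\beta(\{u,v\})$; (nlc2) for distinct $x,y\in V(G)$ with lowest common ancestor $u$, $x$ a descendant of the left child and $y$ of the right child of $u$: $xy\in E(G)$ iff $(\beta(\{u,x\})(\alpha(x)),\beta(\{u,y\})(\alpha(y)))\in R(u)$. Convention: $\beta(\{u,u\})$ is the identity map on $Q$. For an edge $ab$ of $T$, $T_{a\mid b}$ is the component of $a$ in $T-ab$. For a partition $\{C,D\}$ of $V(G)$, a $D$-twin partition of $C$ is a partition of $C$ (parts may be empty) such that any two vertices in a common part have the same neighbourhood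 in $D$. *)

theory Defs
  imports Main
begin

definition graph :: "'a set \<Rightarrow> ('a \<Rightarrow> 'a \<Rightarrow> bool) \<Rightarrow> bool" where
  "graph V E \<longleftrightarrow> finite V \<and> (\<forall>x y. E x y \<longrightarrow> x \<in> V \<and> y \<in> V \<and> x \<noteq> y \<and> E y x)"

definition child :: "('a \<Rightarrow> 'a option) \<Rightarrow> ('a \<Rightarrow> 'a option) \<Rightarrow> 'a \<Rightarrow> 'a \<Rightarrow> bool" where
  "child lc rc u v \<longleftrightarrow> lc u = Some v \<or> rc u = Some v"

definition ancestor :: "('a \<Rightarrow> 'a option) \<Rightarrow> ('a \<Rightarrow> 'a option) \<Rightarrow> 'a \<Rightarrow> 'a \<Rightarrow> bool" where
  "ancestor lc rc u v \<longleftrightarrow> (child lc rc)\<^sup>*\<^sup>* u v"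

definition rooted_binary_tree ::
  "'a set \<Rightarrow> 'a \<Rightarrow> ('a \<Rightarrow> 'a option) \<Rightarrow> ('a \<Rightarrow> 'a option) \<Rightarrow> bool" where
  "rooted_binary_tree N r lc rc \<longleftrightarrow>
     finite N \<and> r \<in> N \<and>
     (\<forall>u v. child lc rc u v \<longrightarrow> u \<in> N \<and> v \<in> N) \<and>
     (\<forall>u v. lc u = Some v \<longrightarrow> rc u \<noteq> Some v) \<and>
     (\<forall>u. \<not> child lc rc u r) \<and>
     (\<forall>u u' v. child lc rc u v \<and> child lc rc u' v \<longrightarrow> u = u') \<and>
     (\<forall>v \<in> N. ancestor lc rc r v)"

definition leaves :: "'a set \<Rightarrow> ('a \<Rightarrow> 'a option) \<Rightarrow> ('a \<Rightarrow> 'a option) \<Rightarrow> 'a set" where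
  "leaves N lc rc = {v \<in> N. lc v = None \<and> rc v = None}"

definition down_path :: "('a \<Rightarrow> 'a option) \<Rightarrow> ('a \<Rightarrow> 'a option) \<Rightarrow> 'a list \<Rightarrow> 'a \<Rightarrow> 'a \<Rightarrow> bool" where
  "down_path lc rc ps u v \<longleftrightarrow> ps \<noteq> [] \<and> hd ps = u \<and> last ps = v \<and>
     (\<forall>i. Suc i < length ps \<longrightarrow> child lc rc (ps ! i) (ps ! Suc i))"

definition betap :: "('a set \<Rightarrow> 'q \<Rightarrow> 'q) \<Rightarrow> 'a \<Rightarrow> 'a \<Rightarrow> 'q \<Rightarrow> 'q" where
  "betap \<beta> u v = (if u = v then id else \<beta> {u, v})"

definition nlc_decomposition ::
  "'a set \<Rightarrow> ('a \<Rightarrow> 'a \<Rightarrow> bool) \<Rightarrow> 'a set \<Rightarrow> 'a \<Rightarrow> ('a \<Rightarrow> 'a option) \<Rightarrow> ('a \<Rightarrow> 'a option)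
    \<Rightarrow> 'q set \<Rightarrow> ('a \<Rightarrow> 'q) \<Rightarrow> ('a set \<Rightarrow> 'q \<Rightarrow> 'q) \<Rightarrow> ('a \<Rightarrow> ('q \<times> 'q) set) \<Rightarrow> bool" where
  "nlc_decomposition V E N r lc rc Q \<alpha> \<beta> R \<longleftrightarrow>
     rooted_binary_tree N r lc rc \<and> leaves N lc rc = V \<and>
     finite Q \<and> \<alpha> ` V \<subseteq> Q \<and>
     (\<forall>u \<in> N. \<forall>v \<in> N. u \<noteq> v \<longrightarrow> \<beta> {u, v} ` Q \<subseteq> Q) \<and>
     (\<forall>u \<in> N. R u \<subseteq> Q \<times> Q) \<and>
     \<comment> \<open>(nlc1)\<close>
     (\<forall>u v ps. u \<noteq> v \<and> down_path lc rc ps u v \<longrightarrow>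
        (\<forall>q \<in> Q. foldr (\<circ>) (map (\<lambda>i. \<beta> {ps ! i, ps ! Suc i}) [0..<length ps - 1]) id q
                 = \<beta> {u, v} q)) \<and>
     \<comment> \<open>(nlc2)\<close>
     (\<forall>u a b x y. u \<in> N \<and> lc u = Some a \<and> rc u = Some b \<and> x \<in> V \<and> y \<in> V \<and>
        ancestor lc rc a x \<and> ancestor lc rc b y \<longrightarrow>
        (E x y \<longleftrightarrow> (betap \<beta> u x (\<alpha> x), betap \<beta> u y (\<alpha> y)) \<in> R u))"

text \<open>Node set of the component of a in T - ab (undirected tree edges).\<close>
definition tree_component ::
  "'a set \<Rightarrow> ('a \<Rightarrow> 'a option) \<Rightarrow> ('a \<Rightarrow> 'a option) \<Rightarrow> 'a \<Rightarrow> 'a \<Rightarrow> 'a set" where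
  "tree_component N lc rc a b =
     {v \<in> N. (\<lambda>x z. (child lc rc x z \<or> child lc rc z x) \<and> {x, z} \<noteq> {a, b})\<^sup>*\<^sup>* a v}"

text \<open>(U q) for q in Q is a D-twin partition of C (parts may be empty).\<close>
definition twin_partition ::
  "('a \<Rightarrow> 'a \<Rightarrow> bool) \<Rightarrow> 'a set \<Rightarrow> 'a set \<Rightarrow> 'q set \<Rightarrow> ('q \<Rightarrow> 'a set) \<Rightarrow> bool" where
  "twin_partition E D C Q U \<longleftrightarrow>
     (\<Union>q \<in> Q. U q) = C \<and>
     (\<forall>q \<in> Q. \<forall>q' \<in> Q. q \<noteq> q' \<longrightarrow> U q \<inter> U q' = {}) \<and>
     (\<forall>q \<in> Q. \<forall>x \<in> U q. \<forall>z \<in> U q. \<forall>d \<in> D. E x d \<longleftrightarrow> E z d)"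

end

theory Submission
  imports Defs
begin

lemma rbt_child_N:
  assumes "rooted_binary_tree N r lc rc" "child lc rc u v"
  shows "u \<in> N \<and> v \<in> N"
  using assms unfolding rooted_binary_tree_def by blast

lemma rbt_uniq:
  assumes "rooted_binary_tree N r lc rc" "child lc rc u v" "child lc rc u' v"
  shows "u = u'"
  using assms unfolding rooted_binary_tree_def by blast

lemma rbt_acyclic_aux:
  assumes T: "rooted_binary_tree N r lc rc" and "(child lc rc)\<^sup>*\<^sup>* r v"
  shows "\<not> (child lc rc)\<^sup>+\<^sup>+ v v"
  using assms(2)
proof (induction rule: rtranclp_induct)
  case base
  show ?case
  proof
    assume "(child lc rc)\<^sup>+\<^sup>+ r r"
    then obtain w where "child lc rc w r" by (metis tranclp.cases)
    then show False using T unfolding rooted_binary_tree_def by blast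
  qed
next
  case (step v w)
  show ?case
  proof
    assume "(child lc rc)\<^sup>+\<^sup>+ w w"
    then obtain w' where w': "(child lc rc)\<^sup>*\<^sup>* w w'" "child lc rc w' w"
      by (metis rtranclp.rtrancl_refl tranclp.cases tranclp_into_rtranclp)
    have "w' = v" using rbt_uniq[OF T w'(2) step(2)] .
    then have "(child lc rc)\<^sup>+\<^sup>+ v v" using w'(1) step(2)
      by (meson rtranclp_into_tranclp2)
    then show False using step(3) by blast
  qed
qed

lemma rbt_acyclic:
  assumes T: "rooted_binary_tree N r lc rc" and "(child lc rc)\<^sup>+\<^sup>+ v v"
  shows False
proof -
  obtain w where "child lc rc w v" using assms(2) by (metis tranclp.cases)
  then have "v \<in> N" using rbt_child_N[OF T] by blast
  then have "(child lc rc)\<^sup>*\<^sup>* r v" using T unfolding rooted_binary_tree_def ancestor_def by blast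
  then show False using rbt_acyclic_aux[OF T] assms(2) by blast
qed

lemma anc_parent:
  assumes "ancestor lc rc a v" "a \<noteq> v"
  shows "\<exists>w. ancestor lc rc a w \<and> child lc rc w v"
  using assms unfolding ancestor_def by (metis rtranclp.cases)

lemma comp_sub:
  assumes T: "rooted_binary_tree N r lc rc" and "v \<in> tree_component N lc rc y p" and py: "child lc rc p y"
  shows "ancestor lc rc y v"
proof -
  have "(\<lambda>x z. (child lc rc x z \<or> child lc rc z x) \<and> {x, z} \<noteq> {y, p})\<^sup>*\<^sup>* y v"
    using assms(2) unfolding tree_component_def by blast
  then show ?thesis
  proof (induction rule: rtranclp_induct)
    case base
    then show ?case unfolding ancestor_def by simp
  next
    case (step v w)
    from step(2) have dis: "child lc rc v w \<or> child lc rc w v" and ne: "{v, w} \<noteq> {y, p}" by auto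
    from dis show ?case
    proof
      assume "child lc rc v w"
      then show ?thesis using step(3) unfolding ancestor_def by auto
    next
      assume wv: "child lc rc w v"
      show ?thesis
      proof (cases "v = y")
        case True
        have "child lc rc p v" using py True by simp
        then have "w = p" using rbt_uniq[OF T wv] by simp
        then show ?thesis using ne True by metis
      next
        case False
        have "y \<noteq> v" using False by simp
        then obtain w' where w': "ancestor lc rc y w'" "child lc rc w' v" using anc_parent[OF step(3)] by blast
        have "w = w'" using rbt_uniq[OF T wv w'(2)] .
        then show ?thesis using w'(1) by simp
      qed
    qed
  qed
qed

lemma comp_sup:
  assumes T: "rooted_binary_tree N r lc rc" and "v \<in> tree_component N lc rc p y" and py: "child lc rc p y"
  shows "\<not> ancestor lc rc y v"
proof -
  have "(\<lambda>x z. (child lc rc x z \<or> child lc rc z x) \<and> {x, z} \<noteq> {p, y})\<^sup>*\<^sup>* p v"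
    using assms(2) unfolding tree_component_def by blast
  then show ?thesis
  proof (induction rule: rtranclp_induct)
    case base
    show ?case
    proof
      assume "ancestor lc rc y p"
      then have "(child lc rc)\<^sup>+\<^sup>+ y y" using py unfolding ancestor_def
        by (meson rtranclp_into_tranclp1)
      then show False using rbt_acyclic[OF T] by blast
    qed
  next
    case (step v w)
    from step(2) have dis: "child lc rc v w \<or> child lc rc w v" and ne: "{v, w} \<noteq> {p, y}" by auto
    from dis show ?case
    proof
      assume vw: "child lc rc v w"
      show ?thesis
      proof
        assume yw: "ancestor lc rc y w"
        show False
        proof (cases "w = y")
          case True
          have "child lc rc p w" using py True by simp
          then have "v = p" using rbt_uniq[OF T vw] by simp
          then show False using ne True by metis
        next
          case False
          have "y \<noteq> w" using False by simp
          then obtain w' where w': "ancestor lc rc y w'" "child lc rc w' w" using anc_parent[OF yw] by blast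
          have "v = w'" using rbt_uniq[OF T vw w'(2)] .
          then show False using w'(1) step(3) by simp
        qed
      qed
    next
      assume "child lc rc w v"
      then show ?thesis using step(3) unfolding ancestor_def
        by (meson rtranclp.rtrancl_into_rtrancl)
    qed
  qed
qed

lemma branch:
  assumes "ancestor lc rc u y" "ancestor lc rc u d" "\<not> ancestor lc rc y d"
    "lc d = None" "rc d = None"
  shows "\<exists>u a b. child lc rc u a \<and> ancestor lc rc a y \<and> ancestor lc rc b d \<and>
     ((lc u = Some a \<and> rc u = Some b) \<or> (lc u = Some b \<and> rc u = Some a))"
  using assms(1,2)
  unfolding ancestor_def
proof (induction rule: converse_rtranclp_induct)
  case base
  then show ?case using assms(3) unfolding ancestor_def by blast
next
  case (step u u1)
  show ?case
  proof (cases "(child lc rc)\<^sup>*\<^sup>* u1 d")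
    case True
    then show ?thesis using step by blast
  next
    case False
    have "u \<noteq> d" using step(1) assms(4,5) unfolding child_def by auto
    then obtain u2 where u2: "child lc rc u u2" "(child lc rc)\<^sup>*\<^sup>* u2 d"
      using step(4) by (metis converse_rtranclpE)
    have "u1 \<noteq> u2" using False u2 by blast
    then have "(lc u = Some u1 \<and> rc u = Some u2) \<or> (lc u = Some u2 \<and> rc u = Some u1)"
      using step(1) u2(1) unfolding child_def by auto
    then show ?thesis using step(1,2) u2 by blast
  qed
qed

lemma path_exists:
  assumes "ancestor lc rc a b"
  shows "\<exists>ps. down_path lc rc ps a b"
  using assms unfolding ancestor_def
proof (induction rule: rtranclp_induct)
  case base
  then show ?case by (rule exI[of _ "[a]"]) (simp add: down_path_def)
next
  case (step b c)
  then obtain ps where ps: "down_path lc rc ps a b" by blast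
  have "down_path lc rc (ps @ [c]) a c"
    unfolding down_path_def
  proof (intro conjI allI impI)
    fix i assume i: "Suc i < length (ps @ [c])"
    show "child lc rc ((ps @ [c]) ! i) ((ps @ [c]) ! Suc i)"
    proof (cases "Suc i < length ps")
      case True
      then show ?thesis using ps unfolding down_path_def by (simp add: nth_append)
    next
      case False
      then have "Suc i = length ps" using i by simp
      moreover have "ps ! i = b" using ps \<open>Suc i = length ps\<close> unfolding down_path_def
        by (metis diff_Suc_1 last_conv_nth)
      ultimately show ?thesis using step(2) by (simp add: nth_append)
    qed
  qed (use ps in \<open>auto simp: down_path_def\<close>)
  then show ?case by blast
qed

lemma path_append:
  assumes "down_path lc rc ps1 a b" "down_path lc rc ps2 b c"
  shows "down_path lc rc (ps1 @ tl ps2) a c"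
  using assms
proof (induction ps1 arbitrary: a)
  case Nil
  then show ?case by (simp add: down_path_def)
next
  case (Cons x xs)
  show ?case
  proof (cases xs)
    case Nil
    then show ?thesis using Cons.prems
      by (cases ps2) (auto simp: down_path_def)
  next
    case (Cons x2 xs2)
    have xs: "down_path lc rc xs x2 b" using Cons.prems(1) \<open>xs = x2 # xs2\<close>
      unfolding down_path_def by auto
    have xx: "child lc rc x x2" using Cons.prems(1) \<open>xs = x2 # xs2\<close>
      unfolding down_path_def by (metis length_Cons nth_Cons_0 nth_Cons_Suc zero_less_Suc Suc_less_eq)
    have IH: "down_path lc rc (xs @ tl ps2) x2 c" using Cons.IH[OF xs Cons.prems(2)] .
    have ha: "a = x" using Cons.prems(1) unfolding down_path_def by simp
    show ?thesis unfolding down_path_def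
    proof (intro conjI allI impI)
      fix i assume i: "Suc i < length ((x # xs) @ tl ps2)"
      show "child lc rc (((x # xs) @ tl ps2) ! i) (((x # xs) @ tl ps2) ! Suc i)"
      proof (cases i)
        case 0
        then show ?thesis using xx \<open>xs = x2 # xs2\<close> by simp
      next
        case (Suc j)
        then show ?thesis using IH i unfolding down_path_def by auto
      qed
    qed (use IH ha in \<open>auto simp: down_path_def\<close>)
  qed
qed

definition pcomp :: "('a set \<Rightarrow> 'q \<Rightarrow> 'q) \<Rightarrow> 'a list \<Rightarrow> 'q \<Rightarrow> 'q" where
  "pcomp \<beta> ps = foldr (\<circ>) (map (\<lambda>(a, b). \<beta> {a, b}) (zip ps (tl ps))) id"

lemma pcomp_eq:
  "foldr (\<circ>) (map (\<lambda>i. \<beta> {ps ! i, ps ! Suc i}) [0..<length ps - 1]) id = pcomp \<beta> ps"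
proof -
  have "map (\<lambda>i. \<beta> {ps ! i, ps ! Suc i}) [0..<length ps - 1] = map (\<lambda>(a, b). \<beta> {a, b}) (zip ps (tl ps))"
    by (rule nth_equalityI) (auto simp: nth_tl)
  then show ?thesis unfolding pcomp_def by simp
qed

lemma pcomp_append:
  assumes "ps1 \<noteq> []" "ps2 \<noteq> []" "last ps1 = hd ps2"
  shows "pcomp \<beta> (ps1 @ tl ps2) = pcomp \<beta> ps1 \<circ> pcomp \<beta> ps2"
  using assms
proof (induction ps1)
  case Nil
  then show ?case by simp
next
  case (Cons x xs)
  show ?case
  proof (cases xs)
    case Nil
    then show ?thesis using Cons.prems by (cases ps2) (auto simp: pcomp_def)
  next
    case (Cons x2 xs2)
    have "pcomp \<beta> (xs @ tl ps2) = pcomp \<beta> xs \<circ> pcomp \<beta> ps2"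
      using Cons.IH Cons.prems \<open>xs = x2 # xs2\<close> by (simp add: comp_def)
    then show ?thesis using \<open>xs = x2 # xs2\<close> by (simp add: pcomp_def fun_eq_iff)
  qed
qed

theorem lemma6p4:
  fixes t :: int and V :: "'a set" and E :: "'a \<Rightarrow> 'a \<Rightarrow> bool"
    and N :: "'a set" and r :: 'a and lc rc :: "'a \<Rightarrow> 'a option"
    and Q :: "'q set" and \<alpha> :: "'a \<Rightarrow> 'q" and \<beta> :: "'a set \<Rightarrow> 'q \<Rightarrow> 'q"
    and R :: "'a \<Rightarrow> ('q \<times> 'q) set" and y p :: 'a
  assumes "graph V E"
    and "nlc_decomposition V E N r lc rc Q \<alpha> \<beta> R"
    and "int (card Q) \<le> t"
    and "y \<in> N" and "y \<noteq> r" and "child lc rc p y"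
  shows "twin_partition E (tree_component N lc rc p y \<inter> V) (tree_component N lc rc y p \<inter> V) Q
           (\<lambda>q. {u \<in> tree_component N lc rc y p \<inter> V. betap \<beta> y u (\<alpha> u) = q})"
proof -
  have T: "rooted_binary_tree N r lc rc"
    using assms(2) unfolding nlc_decomposition_def by (elim conjE) assumption
  have LV: "leaves N lc rc = V"
    using assms(2) unfolding nlc_decomposition_def by (elim conjE) assumption
  have AQ: "\<alpha> ` V \<subseteq> Q"
    using assms(2) unfolding nlc_decomposition_def by (elim conjE) assumption
  have BQ: "\<forall>u \<in> N. \<forall>v \<in> N. u \<noteq> v \<longrightarrow> \<beta> {u, v} ` Q \<subseteq> Q"
    using assms(2) unfolding nlc_decomposition_def by (elim conjE) assumption
  have N1: "\<forall>u v ps. u \<noteq> v \<and> down_path lc rc ps u v \<longrightarrow>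
        (\<forall>q \<in> Q. foldr (\<circ>) (map (\<lambda>i. \<beta> {ps ! i, ps ! Suc i}) [0..<length ps - 1]) id q
                 = \<beta> {u, v} q)"
    using assms(2) unfolding nlc_decomposition_def by (elim conjE) assumption
  have N2: "\<forall>u a b x y. u \<in> N \<and> lc u = Some a \<and> rc u = Some b \<and> x \<in> V \<and> y \<in> V \<and>
        ancestor lc rc a x \<and> ancestor lc rc b y \<longrightarrow>
        (E x y \<longleftrightarrow> (betap \<beta> u x (\<alpha> x), betap \<beta> u y (\<alpha> y)) \<in> R u)"
    using assms(2) unfolding nlc_decomposition_def by (elim conjE) assumption
  have N1': "\<beta> {u, v} q = pcomp \<beta> ps q" if "u \<noteq> v" "down_path lc rc ps u v" "q \<in> Q" for u v ps q
    using N1 that pcomp_eq by metis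
  have Esym: "E x d \<longleftrightarrow> E d x" for x d using assms(1) unfolding graph_def by blast
  define C where "C = tree_component N lc rc y p"
  define D where "D = tree_component N lc rc p y"
  have CN: "C \<subseteq> N" unfolding C_def tree_component_def by blast
  have VN: "V \<subseteq> N" and Vleaf: "\<And>v. v \<in> V \<Longrightarrow> lc v = None \<and> rc v = None"
    using LV unfolding leaves_def by auto
  have val: "betap \<beta> y u (\<alpha> u) \<in> Q" if "u \<in> C \<inter> V" for u
  proof (cases "y = u")
    case True
    then show ?thesis using AQ that by (auto simp: betap_def)
  next
    case False
    have "u \<in> N" "\<alpha> u \<in> Q" using that CN AQ by auto
    then have "\<beta> {y, u} (\<alpha> u) \<in> Q" using BQ False assms(4) by blast
    then show ?thesis using False by (simp add: betap_def)
  qed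
  have key: "betap \<beta> u x (\<alpha> x) = \<beta> {u, y} (betap \<beta> y x (\<alpha> x))"
    if x: "x \<in> V" "ancestor lc rc y x" and ua: "child lc rc u a" "ancestor lc rc a y" for u a x
  proof -
    have uN: "u \<in> N" using rbt_child_N[OF T ua(1)] by blast
    have uy: "ancestor lc rc u y" using ua unfolding ancestor_def
      by (meson converse_rtranclp_into_rtranclp)
    have "(child lc rc)\<^sup>+\<^sup>+ u y" using ua unfolding ancestor_def
      by (meson rtranclp_into_tranclp2)
    then have "u \<noteq> y" using rbt_acyclic[OF T] by blast
    have "u \<noteq> x" using ua(1) Vleaf[OF x(1)] unfolding child_def by auto
    have aq: "\<alpha> x \<in> Q" using AQ x by blast
    show ?thesis
    proof (cases "y = x")
      case True
      then show ?thesis using \<open>u \<noteq> x\<close> by (simp add: betap_def)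
    next
      case False
      obtain ps1 where ps1: "down_path lc rc ps1 u y" using path_exists[OF uy] by blast
      obtain ps2 where ps2: "down_path lc rc ps2 y x" using path_exists[OF x(2)] by blast
      have ps: "down_path lc rc (ps1 @ tl ps2) u x" using path_append[OF ps1 ps2] .
      have "betap \<beta> u x (\<alpha> x) = pcomp \<beta> (ps1 @ tl ps2) (\<alpha> x)"
        using N1'[OF \<open>u \<noteq> x\<close> ps aq] \<open>u \<noteq> x\<close> by (simp add: betap_def)
      also have "\<dots> = pcomp \<beta> ps1 (pcomp \<beta> ps2 (\<alpha> x))"
        using pcomp_append[of ps1 ps2 \<beta>] ps1 ps2 unfolding down_path_def by simp
      also have "pcomp \<beta> ps2 (\<alpha> x) = \<beta> {y, x} (\<alpha> x)" using N1'[OF False ps2 aq] by simp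
      also have "\<beta> {y, x} (\<alpha> x) \<in> Q" using BQ False assms(4) VN x(1) aq by blast
      then have "pcomp \<beta> ps1 (\<beta> {y, x} (\<alpha> x)) = \<beta> {u, y} (\<beta> {y, x} (\<alpha> x))"
        using N1'[OF \<open>u \<noteq> y\<close> ps1] by simp
      finally show ?thesis using False by (simp add: betap_def)
    qed
  qed
  have rN: "ancestor lc rc r v" if "v \<in> N" for v using T that unfolding rooted_binary_tree_def by blast
  have twin: "E x d \<longleftrightarrow> E z d"
    if x: "x \<in> C \<inter> V" and z: "z \<in> C \<inter> V" and d: "d \<in> D \<inter> V"
      and eq: "betap \<beta> y x (\<alpha> x) = betap \<beta> y z (\<alpha> z)" for x z d
  proof -
    have yx: "ancestor lc rc y x" using comp_sub[OF T _ assms(6)] x unfolding C_def by blast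
    have yz: "ancestor lc rc y z" using comp_sub[OF T _ assms(6)] z unfolding C_def by blast
    have yd: "\<not> ancestor lc rc y d" using comp_sup[OF T _ assms(6)] d unfolding D_def by blast
    have dN: "d \<in> N" using d VN by blast
    have dl: "lc d = None \<and> rc d = None" using d Vleaf by blast
    obtain u a b where uab: "child lc rc u a" "ancestor lc rc a y" "ancestor lc rc b d"
      "(lc u = Some a \<and> rc u = Some b) \<or> (lc u = Some b \<and> rc u = Some a)"
      using branch[OF rN[OF assms(4)] rN[OF dN] yd conjunct1[OF dl] conjunct2[OF dl]] by blast
    have uN: "u \<in> N" using rbt_child_N[OF T uab(1)] by blast
    have ax: "ancestor lc rc a x" using uab(2) yx unfolding ancestor_def by simp
    have az: "ancestor lc rc a z" using uab(2) yz unfolding ancestor_def by simp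
    have same: "betap \<beta> u x (\<alpha> x) = betap \<beta> u z (\<alpha> z)"
      using key[OF _ yx uab(1,2)] key[OF _ yz uab(1,2)] x z eq by simp
    from uab(4) show ?thesis
    proof
      assume h: "lc u = Some a \<and> rc u = Some b"
      have "E x d \<longleftrightarrow> (betap \<beta> u x (\<alpha> x), betap \<beta> u d (\<alpha> d)) \<in> R u"
        using uN h x d ax uab(3) by (intro N2[rule_format, of u]) auto
      moreover have "E z d \<longleftrightarrow> (betap \<beta> u z (\<alpha> z), betap \<beta> u d (\<alpha> d)) \<in> R u"
        using uN h z d az uab(3) by (intro N2[rule_format, of u]) auto
      ultimately show ?thesis using same by simp
    next
      assume h: "lc u = Some b \<and> rc u = Some a"
      have "E d x \<longleftrightarrow> (betap \<beta> u d (\<alpha> d), betap \<beta> u x (\<alpha> x)) \<in> R u"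
        using uN h x d ax uab(3) by (intro N2[rule_format, of u]) auto
      moreover have "E d z \<longleftrightarrow> (betap \<beta> u d (\<alpha> d), betap \<beta> u z (\<alpha> z)) \<in> R u"
        using uN h z d az uab(3) by (intro N2[rule_format, of u]) auto
      ultimately show ?thesis using same Esym by metis
    qed
  qed
  show ?thesis
    unfolding twin_partition_def C_def[symmetric] D_def[symmetric]
  proof (intro conjI ballI)
    show "(\<Union>q\<in>Q. {u \<in> C \<inter> V. betap \<beta> y u (\<alpha> u) = q}) = C \<inter> V"
      using val by auto
  next
    fix q q' assume "q \<in> Q" "q' \<in> Q"
    show "q \<noteq> q' \<longrightarrow> {u \<in> C \<inter> V. betap \<beta> y u (\<alpha> u) = q} \<inter> {u \<in> C \<inter> V. betap \<beta> y u (\<alpha> u) = q'} = {}"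
      by auto
  next
    fix q x z d assume "q \<in> Q" "x \<in> {u \<in> C \<inter> V. betap \<beta> y u (\<alpha> u) = q}"
      "z \<in> {u \<in> C \<inter> V. betap \<beta> y u (\<alpha> u) = q}" "d \<in> D \<inter> V"
    then show "E x d \<longleftrightarrow> E z d" using twin by auto
  qed
qed

end
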